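(* Let $p$ be an odd prime. If $M$ is an $A$-module which is free of finite rank over $\mathbb{Z}_{(p)}$, then $\Phi_nM=0$ for some $n$.
   Context: $A$ is the ring of degree zero stable operations in $p$-local complex $K$-theory (a $\mathbb{Z}_{(p)}$-algebra). Fix $q$ primitive mod $p^2$, $\Psi^q\in A$ the Adams operation, $q_i=q^{(-1)^i\lfloor i/2\rfloor}$, $\Theta_n(X)=\prod_{i=1}^n(X-q_i)$, and $\Phi_n=\Theta_n(\Psi^q)\in A$; every element of $A$ is uniquely a convergent sum $\sum_{n\ge0}a_n\Phi_n$ with $a_n\in\mathbb{Z}_{(p)}$. *)

theory Defs
  imports "HOL-Computational_Algebra.Polynomial" "HOL-Number_Theory.Number_Theory"
begin

text \<open>The p-local integers Z_(p), as a subset of the rationals.\<close>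
definition Zp :: "nat \<Rightarrow> rat set" where
  "Zp p = {r. \<not> int p dvd snd (quotient_of r)}"

definition qi :: "int \<Rightarrow> nat \<Rightarrow> rat" where
  "qi q i = (rat_of_int q) powi ((-1) ^ i * int (i div 2))"

definition Theta :: "int \<Rightarrow> nat \<Rightarrow> rat poly" where
  "Theta q n = (\<Prod>i\<in>{1..n}. [: - qi q i, 1 :])"

definition theta_coeff :: "int \<Rightarrow> rat poly \<Rightarrow> nat \<Rightarrow> rat" where
  "theta_coeff q f = (THE d. (\<forall>j > degree f. d j = 0) \<and>
       f = (\<Sum>j\<le>degree f. Polynomial.smult (d j) (Theta q j)))"

text \<open>The ring A: an element sum_n a_n Phi_n is represented by its coefficient
  sequence a (with a_n in Z_(p)). Addition is coefficientwise; multiplication is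
  induced by Phi_n Phi_m = (Theta_n Theta_m)(Psi^q) = sum_k c_k Phi_k.\<close>
definition A_carrier :: "nat \<Rightarrow> (nat \<Rightarrow> rat) set" where
  "A_carrier p = {a. \<forall>n. a n \<in> Zp p}"

definition A_add :: "(nat \<Rightarrow> rat) \<Rightarrow> (nat \<Rightarrow> rat) \<Rightarrow> (nat \<Rightarrow> rat)" where
  "A_add a b = (\<lambda>k. a k + b k)"

definition A_mult :: "int \<Rightarrow> (nat \<Rightarrow> rat) \<Rightarrow> (nat \<Rightarrow> rat) \<Rightarrow> (nat \<Rightarrow> rat)" where
  "A_mult q a b = (\<lambda>k. \<Sum>n\<le>k. \<Sum>m\<le>k.
       a n * b m * theta_coeff q (Theta q n * Theta q m) k)"

definition Phi_el :: "nat \<Rightarrow> (nat \<Rightarrow> rat)" where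
  "Phi_el n = (\<lambda>k. if k = n then 1 else 0)"

definition A_scalar :: "rat \<Rightarrow> (nat \<Rightarrow> rat)" where
  "A_scalar c = (\<lambda>k. if k = 0 then c else 0)"

definition Zp_free :: "nat \<Rightarrow> nat \<Rightarrow> (nat \<Rightarrow> rat) set" where
  "Zp_free p r = {v. (\<forall>i. v i \<in> Zp p) \<and> (\<forall>i\<ge>r. v i = 0)}"

text \<open>act is an A-module structure on Z_(p)^r whose underlying Z_(p)-module
  structure (via Z_(p) -> A) is the standard one.\<close>
definition A_module_on :: "nat \<Rightarrow> int \<Rightarrow> nat \<Rightarrow>
    ((nat \<Rightarrow> rat) \<Rightarrow> (nat \<Rightarrow> rat) \<Rightarrow> (nat \<Rightarrow> rat)) \<Rightarrow> bool" where
  "A_module_on p q r act \<longleftrightarrow>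
     (\<forall>a\<in>A_carrier p. \<forall>v\<in>Zp_free p r. act a v \<in> Zp_free p r) \<and>
     (\<forall>a\<in>A_carrier p. \<forall>b\<in>A_carrier p. \<forall>v\<in>Zp_free p r.
        act (A_add a b) v = (\<lambda>i. act a v i + act b v i)) \<and>
     (\<forall>a\<in>A_carrier p. \<forall>v\<in>Zp_free p r. \<forall>w\<in>Zp_free p r.
        act a (\<lambda>i. v i + w i) = (\<lambda>i. act a v i + act a w i)) \<and>
     (\<forall>a\<in>A_carrier p. \<forall>b\<in>A_carrier p. \<forall>v\<in>Zp_free p r.
        act (A_mult q a b) v = act a (act b v)) \<and>
     (\<forall>c\<in>Zp p. \<forall>v\<in>Zp_free p r. act (A_scalar c) v = (\<lambda>i. c * v i))"

end

theory Submission
  imports Defs "HOL-Library.Countable_Set"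
begin

lemma Zp_iff:
  assumes "prime p"
  shows "r \<in> Zp p \<longleftrightarrow> (\<exists>a b. b > 0 \<and> \<not> int p dvd b \<and> r = of_int a / of_int b)"
proof
  assume "r \<in> Zp p"
  obtain a b where ab: "quotient_of r = (a, b)" by (cases "quotient_of r") auto
  then show "\<exists>a b. b > 0 \<and> \<not> int p dvd b \<and> r = of_int a / of_int b"
    using \<open>r \<in> Zp p\<close> quotient_of_div[OF ab] quotient_of_denom_pos[OF ab]
    by (auto simp: Zp_def)
next
  assume "\<exists>a b. b > 0 \<and> \<not> int p dvd b \<and> r = of_int a / of_int b"
  then obtain a b where b: "b > 0" "\<not> int p dvd b" and r: "r = of_int a / of_int b" by blast
  obtain a' b' where ab: "quotient_of r = (a', b')" by (cases "quotient_of r") auto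
  have b': "b' > 0" using quotient_of_denom_pos[OF ab] .
  have cop: "coprime a' b'" using quotient_of_coprime[OF ab] .
  have "r = of_int a' / of_int b'" using quotient_of_div[OF ab] .
  with r b b' have "of_int a' * of_int b = (of_int a * of_int b' :: rat)"
    by (simp add: field_simps)
  then have eq: "a' * b = a * b'" by (metis of_int_eq_iff of_int_mult)
  have "b' dvd a' * b" by (simp add: eq)
  then have "b' dvd b" using cop
    by (metis coprime_commute coprime_dvd_mult_right_iff)
  then have "\<not> int p dvd b'" using b(2) dvd_trans by blast
  then show "r \<in> Zp p" by (simp add: Zp_def ab)
qed

lemma Zp_int: "prime p \<Longrightarrow> of_int a \<in> Zp p"
  by (auto simp: Zp_def)

lemma Zp_nat: "prime p \<Longrightarrow> of_nat a \<in> Zp p"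
  by (auto simp: Zp_def)

lemma Zp_add:
  assumes "prime p" "x \<in> Zp p" "y \<in> Zp p" shows "x + y \<in> Zp p"
proof -
  have pp: "prime (int p)" using assms(1) by simp
  from assms obtain a b c d where "b > 0" "\<not> int p dvd b" "x = of_int a / of_int b"
    "d > 0" "\<not> int p dvd d" "y = of_int c / of_int d" by (auto simp: Zp_iff)
  then show ?thesis
    apply (subst Zp_iff[OF assms(1)])
    apply (rule exI[of _ "a * d + c * b"], rule exI[of _ "b * d"])
    using pp by (auto simp: field_simps prime_dvd_mult_iff)
qed

lemma Zp_mult:
  assumes "prime p" "x \<in> Zp p" "y \<in> Zp p" shows "x * y \<in> Zp p"
proof -
  have pp: "prime (int p)" using assms(1) by simp
  from assms obtain a b c d where "b > 0" "\<not> int p dvd b" "x = of_int a / of_int b"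
    "d > 0" "\<not> int p dvd d" "y = of_int c / of_int d" by (auto simp: Zp_iff)
  then show ?thesis
    apply (subst Zp_iff[OF assms(1)])
    apply (rule exI[of _ "a * c"], rule exI[of _ "b * d"])
    using pp by (auto simp: field_simps prime_dvd_mult_iff)
qed

lemma Zp_uminus:
  assumes "prime p" "x \<in> Zp p" shows "- x \<in> Zp p"
  using Zp_mult[OF assms(1) Zp_int[OF assms(1), of "-1"] assms(2)] by simp

lemma Zp_diff:
  assumes "prime p" "x \<in> Zp p" "y \<in> Zp p" shows "x - y \<in> Zp p"
  using Zp_add[OF assms(1,2) Zp_uminus[OF assms(1,3)]] by simp

lemma Zp_not_div:
  assumes "prime p" "x \<noteq> 0"
  shows "\<exists>k>0. x / of_nat p ^ k \<notin> Zp p"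
proof -
  have pp: "prime (int p)" using assms(1) by simp
  obtain a b where ab: "quotient_of x = (a, b)" by (cases "quotient_of x") auto
  have b: "b > 0" using quotient_of_denom_pos[OF ab] .
  have xe: "x = of_int a / of_int b" using quotient_of_div[OF ab] .
  have a0: "a \<noteq> 0" using assms(2) xe by auto
  define k where "k = Suc (nat \<bar>a\<bar>)"
  have p2: "p \<ge> 2" using assms(1) prime_ge_2_nat by blast
  have "nat \<bar>a\<bar> < 2 ^ nat \<bar>a\<bar>" by (rule less_exp)
  also have "(2::nat) ^ nat \<bar>a\<bar> \<le> 2 ^ k" unfolding k_def by (intro power_increasing) auto
  also have "(2::nat) ^ k \<le> p ^ k" using p2 by (intro power_mono) auto
  finally have "nat \<bar>a\<bar> < p ^ k" .
  then have lt: "\<bar>a\<bar> < int p ^ k" by (metis nat_less_iff abs_ge_zero of_nat_power)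
  have "x / of_nat p ^ k \<notin> Zp p"
  proof
    assume "x / of_nat p ^ k \<in> Zp p"
    then obtain c d where cd: "d > 0" "\<not> int p dvd d" "x / of_nat p ^ k = of_int c / of_int d"
      by (auto simp: Zp_iff[OF assms(1)])
    have pk: "(of_nat p ^ k :: rat) \<noteq> 0" using p2 by simp
    have "of_int a / of_int b / of_nat p ^ k = (of_int c / of_int d :: rat)" using cd xe by simp
    then have "of_int a * of_int d = (of_int c * of_int b * of_nat p ^ k :: rat)"
      using b cd(1) pk by (simp add: field_simps)
    then have "(of_int (a * d) :: rat) = of_int (c * b * int p ^ k)" by simp
    then have eq: "a * d = c * b * int p ^ k" by (simp only: of_int_eq_iff)
    have "int p ^ k dvd a * d" by (simp add: eq)
    moreover have "coprime (int p ^ k) d" using cd(2) pp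
      by (simp add: prime_imp_coprime)
    ultimately have "int p ^ k dvd a" using coprime_dvd_mult_left_iff by blast
    then have "\<bar>int p ^ k\<bar> \<le> \<bar>a\<bar>" by (rule dvd_imp_le_int[OF a0])
    with lt show False by (simp add: abs_of_nonneg)
  qed
  then show ?thesis unfolding k_def by blast
qed

lemma no_inj_rat: "\<not> inj (g :: (nat \<Rightarrow> bool) \<Rightarrow> rat)"
proof
  assume "inj g"
  define h where "h = to_nat \<circ> g"
  have ih: "inj h" unfolding h_def using \<open>inj g\<close> inj_to_nat by (rule inj_compose[rotated])
  define e where "e n = (\<not> (inv_into UNIV h n) n)" for n
  have "inv_into UNIV h (h e) = e" using ih by (simp add: inv_f_f)
  then have "e (h e) = (\<not> e (h e))" by (metis e_def)
  then show False by blast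
qed

lemma Acar_iff: "a \<in> A_carrier p \<longleftrightarrow> (\<forall>n. a n \<in> Zp p)"
  by (simp add: A_carrier_def)

lemma slender:
  assumes p: "prime p"
  and add: "\<And>a b. a \<in> A_carrier p \<Longrightarrow> b \<in> A_carrier p \<Longrightarrow> f (A_add a b) = f a + f b"
  and val: "\<And>a. a \<in> A_carrier p \<Longrightarrow> f a \<in> Zp p"
  shows "finite {n. f (Phi_el n) \<noteq> 0}"
proof (rule ccontr)
  assume inf: "infinite {n. f (Phi_el n) \<noteq> 0}"
  define B where "B = {n. f (Phi_el n) \<noteq> 0}"
  have infB: "infinite B" using inf B_def by simp
  define b where "b = enumerate B"
  have bsm: "strict_mono b" unfolding b_def using infB by (simp add: strict_mono_enumerate)
  have binj: "b i = b j \<longleftrightarrow> i = j" for i j using bsm strict_mono_eq by blast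
  define F where "F j = f (Phi_el (b j))" for j
  have F0: "F j \<noteq> 0" for j unfolding F_def b_def using enumerate_in_set[OF infB] B_def by auto
  define kk where "kk j = (SOME k. k > 0 \<and> F j / of_nat p ^ k \<notin> Zp p)" for j
  have kk: "kk j > 0 \<and> F j / of_nat p ^ kk j \<notin> Zp p" for j
    unfolding kk_def by (rule someI_ex, rule Zp_not_div[OF p F0])
  define s where "s = rec_nat 0 (\<lambda>j sj. sj + kk j)"
  have s0: "s 0 = 0" and sS: "s (Suc j) = s j + kk j" for j by (simp_all add: s_def)
  have smono: "s i \<le> s j" if "i \<le> j" for i j
    using that by (induction j) (auto simp: sS le_Suc_eq)
  have zero_car: "(\<lambda>_. 0) \<in> A_carrier p" by (simp add: Acar_iff Zp_int[OF p, of 0, simplified])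
  have f0: "f (\<lambda>_. 0) = 0"
  proof -
    have "f (A_add (\<lambda>_. 0) (\<lambda>_. 0)) = f (\<lambda>_. 0) + f (\<lambda>_. 0)" using add zero_car by blast
    then show ?thesis by (simp add: A_add_def)
  qed
  have ppow: "(of_nat p ^ m :: rat) \<in> Zp p" for m using Zp_nat[OF p, of "p ^ m"] by simp
  have mult_car: "(\<lambda>n. c * w n) \<in> A_carrier p" if "c \<in> Zp p" "w \<in> A_carrier p" for c w
    using that Zp_mult[OF p] by (auto simp: Acar_iff)
  have fnat: "f (\<lambda>n. of_nat m * w n) = of_nat m * f w" if w: "w \<in> A_carrier p" for m w
  proof (induction m)
    case 0 then show ?case using f0 by simp
  next
    case (Suc m)
    have "(\<lambda>n. of_nat (Suc m) * w n) = A_add (\<lambda>n. of_nat m * w n) w"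
      by (auto simp: A_add_def algebra_simps)
    moreover have "(\<lambda>n. of_nat m * w n) \<in> A_carrier p" using mult_car[OF Zp_nat[OF p] w] .
    ultimately show ?case using add[OF _ w] Suc by (simp add: algebra_simps)
  qed
  define X where "X e = (\<lambda>n. if \<exists>j. n = b j \<and> e j then (of_nat (p ^ s (THE j. n = b j)) :: rat) else 0)"
    for e :: "nat \<Rightarrow> bool"
  have Xb: "X e (b j) = (if e j then of_nat (p ^ s j) else 0)" for e j
    unfolding X_def using binj by auto
  have Xnb: "X e n = 0" if "n \<notin> range b" for e n
    unfolding X_def using that by auto
  have key: "f (X e) \<noteq> f (X e')" if agree: "\<forall>j<J. e j = e' j" and eJ: "e J" and e'J: "\<not> e' J" for e e' J
  proof
    assume eq: "f (X e) = f (X e')"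
    define S where "S = s (Suc J)"
    define H where "H = (\<lambda>n. if \<exists>j<J. n = b j \<and> e j then (of_nat (p ^ s (THE j. n = b j)) :: rat) else 0)"
    define E where "E = (\<lambda>n. of_nat (p ^ s J) * Phi_el (b J) n :: rat)"
    define W where "W d = (\<lambda>n. if \<exists>j>J. n = b j \<and> d j then (of_nat (p ^ (s (THE j. n = b j) - S)) :: rat) else 0)"
      for d :: "nat \<Rightarrow> bool"
    define T where "T d = (\<lambda>n. of_nat (p ^ S) * W d n :: rat)" for d
    have Hb: "H (b j) = (if j < J \<and> e j then of_nat (p ^ s j) else 0)" for j
      unfolding H_def using binj by auto
    have Hnb: "H n = 0" if "n \<notin> range b" for n unfolding H_def using that by auto
    have Wb: "W d (b j) = (if j > J \<and> d j then of_nat (p ^ (s j - S)) else 0)" for d j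
      unfolding W_def using binj by auto
    have Wnb: "W d n = 0" if "n \<notin> range b" for d n unfolding W_def using that by auto
    have Tb: "T d (b j) = (if j > J \<and> d j then of_nat (p ^ s j) else 0)" for d j
    proof -
      have "j > J \<Longrightarrow> S + (s j - S) = s j" unfolding S_def using smono[of "Suc J" j] by simp
      then show ?thesis unfolding T_def Wb by (auto simp: power_add[symmetric])
    qed
    have Eb: "E (b j) = (if j = J then of_nat (p ^ s J) else 0)" for j
      unfolding E_def Phi_el_def using binj by auto
    have Enb: "E n = 0" if "n \<notin> range b" for n unfolding E_def Phi_el_def using that by auto
    have Hcar: "H \<in> A_carrier p" unfolding Acar_iff H_def using ppow Zp_int[OF p, of 0] by auto
    have Wcar: "W d \<in> A_carrier p" for d unfolding Acar_iff W_def using ppow Zp_int[OF p, of 0] by auto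
    have Phcar: "Phi_el m \<in> A_carrier p" for m unfolding Acar_iff Phi_el_def using Zp_int[OF p, of 0] Zp_int[OF p, of 1] by auto
    have Ecar: "E \<in> A_carrier p" unfolding E_def by (rule mult_car[OF Zp_nat[OF p] Phcar])
    have Tcar: "T d \<in> A_carrier p" for d unfolding T_def by (rule mult_car[OF Zp_nat[OF p] Wcar])
    have HEcar: "A_add H E \<in> A_carrier p" using Hcar Ecar Zp_add[OF p] by (auto simp: Acar_iff A_add_def)
    have X1: "X e = A_add (A_add H E) (T e)"
    proof
      fix n show "X e n = A_add (A_add H E) (T e) n"
      proof (cases "n \<in> range b")
        case True
        then obtain j where "n = b j" by auto
        then show ?thesis using eJ by (auto simp: A_add_def Xb Hb Eb Tb not_less_iff_gr_or_eq)
      next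
        case False
        then show ?thesis by (simp add: A_add_def Xnb Hnb Enb T_def Wnb)
      qed
    qed
    have X2: "X e' = A_add H (T e')"
    proof
      fix n show "X e' n = A_add H (T e') n"
      proof (cases "n \<in> range b")
        case True
        then obtain j where "n = b j" by auto
        then show ?thesis using e'J agree by (auto simp: A_add_def Xb Hb Tb not_less_iff_gr_or_eq)
      next
        case False
        then show ?thesis by (simp add: A_add_def Xnb Hnb T_def Wnb)
      qed
    qed
    have fE: "f E = of_nat (p ^ s J) * F J" unfolding E_def F_def by (rule fnat[OF Phcar])
    have fT: "f (T d) = of_nat (p ^ S) * f (W d)" for d unfolding T_def by (rule fnat[OF Wcar])
    have "f H + of_nat (p ^ s J) * F J + of_nat (p ^ S) * f (W e) = f H + of_nat (p ^ S) * f (W e')"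
      using eq unfolding X1 X2 add[OF HEcar Tcar] add[OF Hcar Ecar] add[OF Hcar Tcar] fE fT by simp
    then have e1: "of_nat (p ^ s J) * F J = of_nat (p ^ s J) * (of_nat p ^ kk J * (f (W e') - f (W e)))"
      unfolding S_def sS by (simp add: algebra_simps power_add)
    have pJ: "(of_nat (p ^ s J) :: rat) \<noteq> 0" using p prime_gt_0_nat by auto
    have pk: "(of_nat p ^ kk J :: rat) \<noteq> 0" using p prime_gt_0_nat by auto
    have "F J = of_nat p ^ kk J * (f (W e') - f (W e))"
      using e1 pJ mult_cancel_left by blast
    then have "F J / of_nat p ^ kk J = f (W e') - f (W e)"
      using pk by simp
    also have "\<dots> \<in> Zp p" using Zp_diff[OF p val[OF Wcar] val[OF Wcar]] .
    finally show False using kk by blast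
  qed
  have "inj (\<lambda>e. f (X e))"
  proof (rule injI, rule ccontr)
    fix e e' :: "nat \<Rightarrow> bool"
    assume eq: "f (X e) = f (X e')" and ne: "e \<noteq> e'"
    then obtain j0 where "e j0 \<noteq> e' j0" by auto
    define J where "J = (LEAST j. e j \<noteq> e' j)"
    have J: "e J \<noteq> e' J" unfolding J_def by (rule LeastI[of _ j0]) fact
    have ag: "\<forall>j<J. e j = e' j" unfolding J_def using not_less_Least by blast
    show False
    proof (cases "e J")
      case True
      then show ?thesis using key[OF ag True] J eq by auto
    next
      case False
      then show ?thesis using key[of J e' e] ag J eq by auto
    qed
  qed
  then show False using no_inj_rat by blast
qed

lemma Zfree_iff: "v \<in> Zp_free p r \<longleftrightarrow> (\<forall>i. v i \<in> Zp p) \<and> (\<forall>i\<ge>r. v i = 0)"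
  by (simp add: Zp_free_def)

lemma vanish:
  assumes p: "prime p"
    and gin: "\<And>v. v \<in> Zp_free p r \<Longrightarrow> g v \<in> Zp_free p r"
    and gadd: "\<And>v w. v \<in> Zp_free p r \<Longrightarrow> w \<in> Zp_free p r \<Longrightarrow> g (\<lambda>i. v i + w i) = (\<lambda>i. g v i + g w i)"
    and gu: "\<And>i. i < r \<Longrightarrow> g (\<lambda>l. if l = i then 1 else 0) = (\<lambda>_. 0)"
    and v: "v \<in> Zp_free p r"
  shows "g v = (\<lambda>_. 0)"
proof -
  have z0: "(0::rat) \<in> Zp p" using Zp_int[OF p, of 0] by simp
  have z1: "(1::rat) \<in> Zp p" using Zp_int[OF p, of 1] by simp
  have zero_free: "(\<lambda>_. 0) \<in> Zp_free p r" using z0 by (simp add: Zfree_iff)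
  have g0: "g (\<lambda>_. 0) = (\<lambda>_. 0)"
  proof -
    have "g (\<lambda>i. 0 + 0) = (\<lambda>i. g (\<lambda>_. 0) i + g (\<lambda>_. 0) i)" using gadd[OF zero_free zero_free] by simp
    then have "\<And>i. g (\<lambda>_. 0) i = g (\<lambda>_. 0) i + g (\<lambda>_. 0) i" by (metis add_0)
    then show ?thesis by (auto simp: fun_eq_iff)
  qed
  have smul_free: "(\<lambda>i. c * x i) \<in> Zp_free p r" if "c \<in> Zp p" "x \<in> Zp_free p r" for c x
    using that Zp_mult[OF p] by (auto simp: Zfree_iff)
  have gnat: "g (\<lambda>i. of_nat m * x i) = (\<lambda>i. of_nat m * g x i)" if x: "x \<in> Zp_free p r" for m x
  proof (induction m)
    case 0 then show ?case using g0 by simp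
  next
    case (Suc m)
    have "(\<lambda>i. of_nat (Suc m) * x i) = (\<lambda>i. of_nat m * x i + x i)" by (auto simp: algebra_simps)
    then show ?case using gadd[OF smul_free[OF Zp_nat[OF p] x] x] Suc by (simp add: algebra_simps)
  qed
  have gneg: "g (\<lambda>i. - x i) = (\<lambda>i. - g x i)" if x: "x \<in> Zp_free p r" for x
  proof -
    have nx: "(\<lambda>i. - x i) \<in> Zp_free p r" using smul_free[OF Zp_int[OF p, of "-1"] x] by simp
    have "g (\<lambda>i. x i + - x i) = (\<lambda>i. g x i + g (\<lambda>i. - x i) i)" using gadd[OF x nx] .
    then have "(\<lambda>_. 0) = (\<lambda>i. g x i + g (\<lambda>i. - x i) i)" using g0 by simp
    then show ?thesis by (auto simp: fun_eq_iff eq_neg_iff_add_eq_0 add.commute)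
  qed
  define u where "u i = (\<lambda>l::nat. if l = i then (1::rat) else 0)" for i :: nat
  have ufree: "u i \<in> Zp_free p r" if "i < r" for i using that z0 z1 by (auto simp: Zfree_iff u_def)
  have gcu: "g (\<lambda>l. c * u i l) = (\<lambda>_. 0)" if c: "c \<in> Zp p" and i: "i < r" for c i
  proof -
    obtain a b where ab: "b > 0" "c = of_int a / of_int b" using c by (auto simp: Zp_iff[OF p])
    have cu: "(\<lambda>l. c * u i l) \<in> Zp_free p r" by (rule smul_free[OF c ufree[OF i]])
    have gint: "g (\<lambda>l. of_int a * u i l) = (\<lambda>_. 0)"
    proof (cases "a \<ge> 0")
      case True
      then have "(\<lambda>l. of_int a * u i l) = (\<lambda>l. of_nat (nat a) * u i l)" by simp
      then show ?thesis using gnat[OF ufree[OF i]] gu[OF i] by (simp add: u_def)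
    next
      case False
      then have "(\<lambda>l. of_int a * u i l) = (\<lambda>l. - (of_nat (nat (-a)) * u i l))" by (auto simp: fun_eq_iff)
      moreover have "(\<lambda>l. of_nat (nat (-a)) * u i l) \<in> Zp_free p r" by (rule smul_free[OF Zp_nat[OF p] ufree[OF i]])
      ultimately show ?thesis using gneg gnat[OF ufree[OF i]] gu[OF i] by (simp add: u_def)
    qed
    have "(\<lambda>l. of_nat (nat b) * (c * u i l)) = (\<lambda>l. of_int a * u i l)"
      using ab by (auto simp: fun_eq_iff)
    then have "(\<lambda>l. of_nat (nat b) * g (\<lambda>l. c * u i l) l) = (\<lambda>_. 0)"
      using gnat[OF cu, of "nat b"] gint by simp
    then show ?thesis using ab(1) by (auto simp: fun_eq_iff)
  qed
  have ind: "\<forall>v. v \<in> Zp_free p r \<and> (\<forall>i\<ge>m. v i = 0) \<longrightarrow> g v = (\<lambda>_. 0)" if "m \<le> r" for m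
    using that
  proof (induction m)
    case 0
    then show ?case using g0 by (auto simp: fun_eq_iff)
  next
    case (Suc m)
    show ?case
    proof (intro allI impI)
      fix v assume h: "v \<in> Zp_free p r \<and> (\<forall>i\<ge>Suc m. v i = 0)"
      define v' where "v' = v(m := 0)"
      have v'f: "v' \<in> Zp_free p r" using h z0 by (auto simp: Zfree_iff v'_def)
      have v'z: "\<forall>i\<ge>m. v' i = 0" using h by (auto simp: v'_def)
      have vm: "v m \<in> Zp p" using h by (auto simp: Zfree_iff)
      have mr: "m < r" using Suc.prems by simp
      have dec: "v = (\<lambda>i. v' i + v m * u m i)" by (auto simp: fun_eq_iff v'_def u_def)
      have "g v = (\<lambda>i. g v' i + g (\<lambda>l. v m * u m l) i)"
        using gadd[OF v'f smul_free[OF vm ufree[OF mr]]] dec by metis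
      also have "\<dots> = (\<lambda>_. 0)" using Suc.IH[of] Suc.prems v'f v'z gcu[OF vm mr] by auto
      finally show "g v = (\<lambda>_. 0)" .
    qed
  qed
  show ?thesis using ind[of r] v by (auto simp: Zfree_iff)
qed

theorem proposition3p6:
  fixes p :: nat and q :: int and r :: nat
    and act :: "(nat \<Rightarrow> rat) \<Rightarrow> (nat \<Rightarrow> rat) \<Rightarrow> (nat \<Rightarrow> rat)"
  assumes "prime p" and "odd p"
    and "residue_primroot (p ^ 2) (nat (q mod int (p ^ 2)))"
    and "A_module_on p q r act"
  shows "\<exists>n. \<forall>v\<in>Zp_free p r. act (Phi_el n) v = (\<lambda>i. 0)"
proof -
  note p = assms(1)
  have ax1: "\<And>a v. a \<in> A_carrier p \<Longrightarrow> v \<in> Zp_free p r \<Longrightarrow> act a v \<in> Zp_free p r"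
    and ax2: "\<And>a b v. a \<in> A_carrier p \<Longrightarrow> b \<in> A_carrier p \<Longrightarrow> v \<in> Zp_free p r \<Longrightarrow>
        act (A_add a b) v = (\<lambda>i. act a v i + act b v i)"
    and ax3: "\<And>a v w. a \<in> A_carrier p \<Longrightarrow> v \<in> Zp_free p r \<Longrightarrow> w \<in> Zp_free p r \<Longrightarrow>
        act a (\<lambda>i. v i + w i) = (\<lambda>i. act a v i + act a w i)"
    using assms(4) unfolding A_module_on_def by blast+
  define u where "u i = (\<lambda>l::nat. if l = i then (1::rat) else 0)" for i :: nat
  have ufree: "u i \<in> Zp_free p r" if "i < r" for i
    using that Zp_int[OF p, of 0] Zp_int[OF p, of 1] by (auto simp: Zfree_iff u_def)
  define Bad where "Bad i j = {n. act (Phi_el n) (u i) j \<noteq> 0}" for i j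
  have finBad: "finite (Bad i j)" if "i < r" for i j
    unfolding Bad_def
  proof (rule slender[OF p, where f = "\<lambda>a. act a (u i) j"])
    fix a b assume "a \<in> A_carrier p" "b \<in> A_carrier p"
    then show "act (A_add a b) (u i) j = act a (u i) j + act b (u i) j"
      using ax2 ufree[OF that] by simp
  next
    fix a assume "a \<in> A_carrier p"
    then show "act a (u i) j \<in> Zp p" using ax1 ufree[OF that] by (simp add: Zfree_iff)
  qed
  define U where "U = (\<Union>i<r. \<Union>j<r. Bad i j)"
  have "finite U" unfolding U_def using finBad by auto
  then obtain N where N: "U \<subseteq> {..<N}" using finite_nat_bounded by blast
  have Phcar: "Phi_el N \<in> A_carrier p"
    using Zp_int[OF p, of 0] Zp_int[OF p, of 1] by (auto simp: A_carrier_def Phi_el_def)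
  have gu: "act (Phi_el N) (u i) = (\<lambda>_. 0)" if i: "i < r" for i
  proof
    fix j show "act (Phi_el N) (u i) j = 0"
    proof (cases "j < r")
      case True
      then have "N \<notin> Bad i j" using N i unfolding U_def by auto
      then show ?thesis unfolding Bad_def by simp
    next
      case False
      then show ?thesis using ax1[OF Phcar ufree[OF i]] by (simp add: Zfree_iff)
    qed
  qed
  show ?thesis
  proof (intro exI ballI)
    fix v assume v: "v \<in> Zp_free p r"
    show "act (Phi_el N) v = (\<lambda>i. 0)"
      by (rule vanish[OF p, where g = "act (Phi_el N)"])
         (use ax1[OF Phcar] ax3[OF Phcar] gu v in \<open>auto simp: u_def\<close>)
  qed
qed

end
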